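(* Let $y:\mathbb{R}\to\mathbb{C}^q$ be an almost periodic function with $y_\gamma(t)=(y(\gamma^{p_1}(t)),\dots,y(\gamma^{p_\ell}(t)))\in W$ for all $t\in\mathbb{R}$. Assume (H2) holds and $F$ satisfies (H4). Then the function $g(t)=F(t,y_\gamma(t))$ satisfies (H3), i.e.: for every $\varepsilon>0$ the set $\{\tau\in\mathbb{R}:|g(t+\tau)-g(t)|\le\varepsilon \text{ for all } t\in\mathbb{R}\setminus\bigcup_{n\in\mathbb{Z}}(t_n-\varepsilon,t_n+\varepsilon)\}$ is relatively dense, and there is $\delta_\varepsilon>0$ such that $|g(t'+\tau')-g(t')|\le\varepsilon$ whenever $|\tau'|\le\delta_\varepsilon$ and $t',t'+\tau'$ lie in a common interval $[t_n,t_{n+1}]$.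
   Context: $|\cdot|$ is the Euclidean norm. Fix a real sequence $(t_n)_{n\in\mathbb{Z}}$ with $t_n<t_{n+1}$ and $t_n\to\pm\infty$ as $n\to\pm\infty$; $t^{(k)}_n=t_{n+k}-t_n$; for $p\in\mathbb{Z}$, $\gamma^p(t)=t_{n-p}$ for $t\in[t_n,t_{n+1})$. Fix $\ell\in\mathbb{N}$ and $p_1,\dots,p_\ell\in\mathbb{N}\cup\{0\}$. A set is relatively dense if there is $l>0$ such that it meets every interval $[m,m+l]$. A continuous $y:\mathbb{R}\to\mathbb{C}^q$ is almost periodic if for every $\varepsilon>0$ the set $\{\tau:|y(t+\tau)-y(t)|\le\varepsilon\ \forall t\}$ is relatively dense. (H2): for every $\varepsilon>0$ the set $\bigcap_{k\in\mathbb{N}}\{T\in\mathbb{Z}:|t^{(k)}_{T+n}-t^{(k)}_n|\le\varepsilon\ \forall n\in\mathbb{Z}\}$ is relatively dense. (H4): $W\subseteq(\mathbb{C}^q)^\ell$ nonempty, $F:\mathbb{R}\times W\to\mathbb{C}^q$ continuous and uniformly almost periodic on $W$ (for every $\varepsilon>0$ the set $\{\tau\in\mathbb{R}:|F(t+\tau,w)-F(t,w)|\le\varepsilon\ \forall(t,w)\in\mathbb{R}\times W\}$ is relatively dense), and there is $L>0$ with $|F(t,x_1,\dots,x_\ell)-F(t,y_1,\dots,y_\ell)|\le L\sum_{j=1}^\ell|x_j-y_j|$ for all $t$ and all $(x_j),(y_j)\in W$. *)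

theory Defs
  imports "HOL-Analysis.Analysis"
begin

definition rel_dense :: "real set \<Rightarrow> bool" where
  "rel_dense S \<longleftrightarrow> (\<exists>l>0. \<forall>m. \<exists>x\<in>S. m \<le> x \<and> x \<le> m + l)"

definition almost_periodic :: "(real \<Rightarrow> 'a::real_normed_vector) \<Rightarrow> bool" where
  "almost_periodic y \<longleftrightarrow> continuous_on UNIV y \<and>
     (\<forall>\<epsilon>>0. rel_dense {\<tau>. \<forall>s. norm (y (s + \<tau>) - y s) \<le> \<epsilon>})"

definition admissible_seq :: "(int \<Rightarrow> real) \<Rightarrow> bool" where
  "admissible_seq tt \<longleftrightarrow> strict_mono tt \<and> filterlim tt at_top at_top \<and> filterlim tt at_bot at_bot"

definition piece_index :: "(int \<Rightarrow> real) \<Rightarrow> real \<Rightarrow> int" where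
  "piece_index tt s = (THE n. tt n \<le> s \<and> s < tt (n + 1))"

definition gammaP :: "(int \<Rightarrow> real) \<Rightarrow> int \<Rightarrow> real \<Rightarrow> real" where
  "gammaP tt p s = tt (piece_index tt s - p)"

definition tk :: "(int \<Rightarrow> real) \<Rightarrow> nat \<Rightarrow> int \<Rightarrow> real" where
  "tk tt k n = tt (n + int k) - tt n"

definition H2 :: "(int \<Rightarrow> real) \<Rightarrow> bool" where
  "H2 tt \<longleftrightarrow> (\<forall>\<epsilon>>0. rel_dense (real_of_int `
      (\<Inter>k\<in>{k::nat. k \<ge> 1}. {T::int. \<forall>n. \<bar>tk tt k (T + n) - tk tt k n\<bar> \<le> \<epsilon>})))"

definition unif_almost_periodic_on ::
    "'w set \<Rightarrow> (real \<Rightarrow> 'w \<Rightarrow> 'b::real_normed_vector) \<Rightarrow> bool" where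
  "unif_almost_periodic_on W F \<longleftrightarrow>
     (\<forall>\<epsilon>>0. rel_dense {\<tau>. \<forall>s. \<forall>w\<in>W. norm (F (s + \<tau>) w - F s w) \<le> \<epsilon>})"

definition H4 :: "((complex^'q::finite)^'l::finite) set
     \<Rightarrow> (real \<Rightarrow> (complex^'q)^'l \<Rightarrow> complex^'q) \<Rightarrow> bool" where
  "H4 W F \<longleftrightarrow> W \<noteq> {} \<and> continuous_on (UNIV \<times> W) (\<lambda>(s, w). F s w) \<and>
     unif_almost_periodic_on W F \<and>
     (\<exists>L>0. \<forall>s. \<forall>x\<in>W. \<forall>z\<in>W. norm (F s x - F s z) \<le> L * (\<Sum>j\<in>UNIV. norm (x $ j - z $ j)))"

end

theory Submission
  imports Defs
begin


lemma rel_dense_mono: "rel_dense S \<Longrightarrow> S \<subseteq> T \<Longrightarrow> rel_dense T"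
  unfolding rel_dense_def by blast

lemma per_diff:
  fixes f :: "real \<Rightarrow> 'a::real_normed_vector"
  assumes "\<forall>s. norm (f (s + a) - f s) \<le> e1" "\<forall>s. norm (f (s + b) - f s) \<le> e2"
  shows "norm (f (s + (a - b)) - f s) \<le> e1 + e2"
proof -
  have "f (s + (a - b)) - f s = (f ((s - b) + a) - f (s - b)) - (f ((s - b) + b) - f (s - b))"
    by (simp add: algebra_simps)
  also have "norm \<dots> \<le> norm (f ((s - b) + a) - f (s - b)) + norm (f ((s - b) + b) - f (s - b))"
    by (rule norm_triangle_ineq4)
  also have "\<dots> \<le> e1 + e2" using assms(1)[rule_format, of "s - b"] assms(2)[rule_format, of "s - b"] by simp
  finally show ?thesis .
qed

lemma ap_unif_cont:
  fixes f :: "real \<Rightarrow> 'a::real_normed_vector"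
  assumes c: "continuous_on UNIV f" and ap: "\<forall>\<epsilon>>0. rel_dense {\<tau>. \<forall>s. norm (f (s + \<tau>) - f s) \<le> \<epsilon>}"
    and e: "\<epsilon> > 0"
  shows "\<exists>\<delta>>0. \<forall>x h. \<bar>h\<bar> \<le> \<delta> \<longrightarrow> norm (f (x + h) - f x) \<le> \<epsilon>"
proof -
  obtain l where l: "l > 0" "\<forall>m. \<exists>\<tau>\<in>{\<tau>. \<forall>s. norm (f (s + \<tau>) - f s) \<le> \<epsilon>/3}. m \<le> \<tau> \<and> \<tau> \<le> m + l"
  proof -
    have "rel_dense {\<tau>. \<forall>s. norm (f (s + \<tau>) - f s) \<le> \<epsilon>/3}"
      using ap e by (meson divide_pos_pos zero_less_numeral)
    then show ?thesis using that unfolding rel_dense_def by blast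
  qed
  have uc: "uniformly_continuous_on {-1..l+1} f"
    by (rule compact_uniformly_continuous) (auto intro: continuous_on_subset[OF c])
  have "\<exists>d>0. \<forall>x\<in>{-1..l+1}. \<forall>x'\<in>{-1..l+1}. dist x' x < d \<longrightarrow> dist (f x') (f x) < \<epsilon>/3"
  proof -
    have e3: "0 < \<epsilon>/3" using e by simp
    show ?thesis using uc e3 unfolding uniformly_continuous_on_def by blast
  qed
  then obtain d where d: "d > 0" "\<forall>x\<in>{-1..l+1}. \<forall>x'\<in>{-1..l+1}. dist x' x < d \<longrightarrow> dist (f x') (f x) < \<epsilon>/3"
    by blast
  show ?thesis
  proof (intro exI[of _ "min (d/2) 1"] conjI allI impI)
    show "0 < min (d / 2) 1" using d by simp
    fix x h assume h: "\<bar>h\<bar> \<le> min (d / 2) 1"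
    obtain \<tau> where t: "\<forall>s. norm (f (s + \<tau>) - f s) \<le> \<epsilon>/3" "-x \<le> \<tau>" "\<tau> \<le> -x + l"
      using l(2) by blast
    have 1: "norm (f (x + h + \<tau>) - f (x + h)) \<le> \<epsilon>/3" using t(1) by blast
    have 2: "norm (f (x + \<tau>) - f x) \<le> \<epsilon>/3" using t(1) by blast
    have i1: "x + h + \<tau> \<in> {-1..l+1}" "x + \<tau> \<in> {-1..l+1}" "dist (x + h + \<tau>) (x + \<tau>) < d"
      using h t(2,3) d(1) by (auto simp: dist_real_def)
    have 3: "dist (f (x + h + \<tau>)) (f (x + \<tau>)) < \<epsilon>/3"
      using d(2) i1 by blast
    have a1: "norm (f (x + h) - f (x + h + \<tau>)) \<le> \<epsilon>/3" using 1 by (simp add: norm_minus_commute)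
    have a2: "norm (f (x + h + \<tau>) - f (x + \<tau>)) \<le> \<epsilon>/3" using 3 by (simp add: dist_norm)
    have "norm (f (x + h) - f (x + \<tau>)) \<le> \<epsilon>/3 + \<epsilon>/3" by (rule norm_diff_triangle_le[OF a1 a2])
    then have "norm (f (x + h) - f x) \<le> (\<epsilon>/3 + \<epsilon>/3) + \<epsilon>/3" by (rule norm_diff_triangle_le[OF _ 2])
    then show "norm (f (x + h) - f x) \<le> \<epsilon>" by simp
  qed
qed

lemma ap_bounded:
  fixes f :: "real \<Rightarrow> 'a::real_normed_vector"
  assumes c: "continuous_on UNIV f" and ap: "\<forall>\<epsilon>>0. rel_dense {\<tau>. \<forall>s. norm (f (s + \<tau>) - f s) \<le> \<epsilon>}"
  shows "\<exists>B. \<forall>s. norm (f s) \<le> B"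
proof -
  obtain l where l: "l > 0" "\<forall>m. \<exists>\<tau>\<in>{\<tau>. \<forall>s. norm (f (s + \<tau>) - f s) \<le> 1}. m \<le> \<tau> \<and> \<tau> \<le> m + l"
  proof -
    have "rel_dense {\<tau>. \<forall>s. norm (f (s + \<tau>) - f s) \<le> 1}" using ap zero_less_one by blast
    then show ?thesis using that unfolding rel_dense_def by blast
  qed
  have "compact (f ` {0..l})"
    by (rule compact_continuous_image) (auto intro: continuous_on_subset[OF c])
  then have "bounded (f ` {0..l})" by (rule compact_imp_bounded)
  then obtain B0 where "\<forall>z\<in>f ` {0..l}. norm z \<le> B0" unfolding bounded_iff by blast
  then obtain B where B: "\<forall>x\<in>{0..l}. norm (f x) \<le> B" by blast
  show ?thesis
  proof (intro exI[of _ "B + 1"] allI)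
    fix s
    obtain \<tau> where t: "\<forall>s. norm (f (s + \<tau>) - f s) \<le> 1" "-s \<le> \<tau>" "\<tau> \<le> -s + l"
      using l(2) by blast
    have "norm (f s) \<le> norm (f (s + \<tau>)) + norm (f (s + \<tau>) - f s)"
      using norm_triangle_sub[of "f s" "f (s + \<tau>)"] by (simp add: norm_minus_commute)
    also have "\<dots> \<le> B + 1" using B t by (intro add_mono) auto
    finally show "norm (f s) \<le> B + 1" .
  qed
qed

lemma floor_close:
  fixes x y d :: real
  assumes d: "d > 0" and e: "\<lfloor>x / d\<rfloor> = \<lfloor>y / d\<rfloor>"
  shows "\<bar>x - y\<bar> < d"
proof -
  have 1: "real_of_int \<lfloor>x / d\<rfloor> \<le> x / d" "x / d < real_of_int \<lfloor>x / d\<rfloor> + 1"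
    by (rule of_int_floor_le, rule real_of_int_floor_add_one_gt)
  have 2: "real_of_int \<lfloor>y / d\<rfloor> \<le> y / d" "y / d < real_of_int \<lfloor>y / d\<rfloor> + 1"
    by (rule of_int_floor_le, rule real_of_int_floor_add_one_gt)
  have 3: "x / d - y / d < 1" "y / d - x / d < 1" using 1 2 e by linarith+
  have 4: "(x / d - y / d) * d < 1 * d" "(y / d - x / d) * d < 1 * d"
    using mult_strict_right_mono[OF 3(1) d] mult_strict_right_mono[OF 3(2) d] by auto
  have 5: "(x / d - y / d) * d = x - y" using d by (simp add: field_simps)
  have 6: "(y / d - x / d) * d = y - x" using d by (simp add: field_simps)
  have 7: "x - y < d" using 4(1) unfolding 5 by simp
  have 8: "y - x < d" using 4(2) unfolding 6 by simp
  show ?thesis using 7 8 by (simp add: abs_less_iff)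
qed

lemma besicovitch:
  fixes A1 B1 A B :: "real set"
  assumes rA: "rel_dense A1" and rB: "rel_dense B1"
    and dA: "\<forall>a\<in>A1. \<forall>a'\<in>A1. a - a' \<in> A" and dB: "\<forall>b\<in>B1. \<forall>b'\<in>B1. b - b' \<in> B"
    and d: "\<delta> > 0"
  shows "rel_dense {\<tau>\<in>A. \<exists>\<sigma>\<in>B. \<bar>\<tau> - \<sigma>\<bar> \<le> \<delta>}"
proof -
  obtain l1 where l1: "l1 > 0" "\<forall>m. \<exists>x\<in>A1. m \<le> x \<and> x \<le> m + l1" using rA unfolding rel_dense_def by blast
  obtain l2 where l2: "l2 > 0" "\<forall>m. \<exists>x\<in>B1. m \<le> x \<and> x \<le> m + l2" using rB unfolding rel_dense_def by blast
  define l where "l = max l1 l2"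
  have ab: "\<exists>a\<in>A1. \<exists>b\<in>B1. m \<le> a \<and> a \<le> m + l \<and> m \<le> b \<and> b \<le> m + l" for m
  proof -
    obtain a where a: "a \<in> A1" "m \<le> a" "a \<le> m + l1" using l1(2) by blast
    obtain b where b: "b \<in> B1" "m \<le> b" "b \<le> m + l2" using l2(2) by blast
    have "l1 \<le> l" "l2 \<le> l" unfolding l_def by simp_all
    then have "a \<le> m + l" "b \<le> m + l" using a b by linarith+
    then show ?thesis using a b by blast
  qed
  define K where "K = {k. \<exists>a\<in>A1. \<exists>b\<in>B1. \<bar>a - b\<bar> \<le> l \<and> \<lfloor>(a - b) / \<delta>\<rfloor> = k}"
  have "K \<subseteq> {\<lfloor>-l / \<delta>\<rfloor>..\<lfloor>l / \<delta>\<rfloor>}"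
  proof
    fix k assume "k \<in> K"
    then obtain a b where ab1: "\<bar>a - b\<bar> \<le> l" and ab2: "\<lfloor>(a - b) / \<delta>\<rfloor> = k" unfolding K_def by blast
    have ab3: "-l \<le> a - b" "a - b \<le> l" using ab1 by auto
    have ab4: "-l / \<delta> \<le> (a - b) / \<delta>"
      by (rule divide_right_mono) (use ab3 d in auto)
    have ab5: "(a - b) / \<delta> \<le> l / \<delta>"
      by (rule divide_right_mono) (use ab3 d in auto)
    have "\<lfloor>-l / \<delta>\<rfloor> \<le> \<lfloor>(a - b) / \<delta>\<rfloor>" by (rule floor_mono[OF ab4])
    moreover have "\<lfloor>(a - b) / \<delta>\<rfloor> \<le> \<lfloor>l / \<delta>\<rfloor>" by (rule floor_mono[OF ab5])
    ultimately show "k \<in> {\<lfloor>-l / \<delta>\<rfloor>..\<lfloor>l / \<delta>\<rfloor>}" using ab2 by simp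
  qed
  then have fK: "finite K" by (rule finite_subset) simp
  have "\<forall>k\<in>K. \<exists>q. fst q \<in> A1 \<and> snd q \<in> B1 \<and> \<lfloor>(fst q - snd q) / \<delta>\<rfloor> = k"
  proof
    fix k assume "k \<in> K"
    then obtain a b where "a \<in> A1" "b \<in> B1" "\<lfloor>(a - b) / \<delta>\<rfloor> = k" unfolding K_def by blast
    then show "\<exists>q. fst q \<in> A1 \<and> snd q \<in> B1 \<and> \<lfloor>(fst q - snd q) / \<delta>\<rfloor> = k"
      by (intro exI[of _ "(a, b)"]) simp
  qed
  from bchoice[OF this] obtain r where r: "\<forall>k\<in>K. fst (r k) \<in> A1 \<and> snd (r k) \<in> B1 \<and> \<lfloor>(fst (r k) - snd (r k)) / \<delta>\<rfloor> = k"
    by blast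
  define C where "C = (\<Sum>k\<in>K. \<bar>fst (r k)\<bar>)"
  have C: "\<bar>fst (r k)\<bar> \<le> C" if "k \<in> K" for k
    unfolding C_def using fK that by (intro member_le_sum) auto
  have C0: "C \<ge> 0" unfolding C_def by (simp add: sum_nonneg)
  have l0: "l > 0" using l1 unfolding l_def by simp
  show ?thesis unfolding rel_dense_def
  proof (intro exI[of _ "l + 2 * C"] conjI allI)
    show "0 < l + 2 * C" using l0 C0 by simp
    fix m
    obtain a b where a: "a \<in> A1" "b \<in> B1" "m + C \<le> a" "a \<le> m + C + l" "m + C \<le> b" "b \<le> m + C + l"
      using ab[of "m + C"] by blast
    define k where "k = \<lfloor>(a - b) / \<delta>\<rfloor>"
    have "\<bar>a - b\<bar> \<le> l" using a(3-6) by (simp add: abs_le_iff)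
    then have kK: "k \<in> K" unfolding K_def k_def using a(1,2) by blast
    have Ck: "\<bar>fst (r k)\<bar> \<le> C" using C kK by blast
    have rk: "fst (r k) \<in> A1" "snd (r k) \<in> B1" "\<lfloor>(fst (r k) - snd (r k)) / \<delta>\<rfloor> = k" using r kK by blast+
    have "a - fst (r k) \<in> A" using dA a(1) rk(1) by blast
    moreover have "b - snd (r k) \<in> B" using dB a(2) rk(2) by blast
    moreover have "\<bar>(a - fst (r k)) - (b - snd (r k))\<bar> \<le> \<delta>"
    proof -
      have "\<bar>(a - b) - (fst (r k) - snd (r k))\<bar> < \<delta>"
        using floor_close[OF d, of "a - b" "fst (r k) - snd (r k)"] rk(3) k_def by simp
      then show ?thesis by simp
    qed
    ultimately have "a - fst (r k) \<in> {\<tau>\<in>A. \<exists>\<sigma>\<in>B. \<bar>\<tau> - \<sigma>\<bar> \<le> \<delta>}" by blast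
    moreover have "m \<le> a - fst (r k)" "a - fst (r k) \<le> m + (l + 2 * C)"
      using a(3,4) Ck by (simp_all add: abs_le_iff)
    ultimately show "\<exists>x\<in>{\<tau>\<in>A. \<exists>\<sigma>\<in>B. \<bar>\<tau> - \<sigma>\<bar> \<le> \<delta>}. m \<le> x \<and> x \<le> m + (l + 2 * C)" by blast
  qed
qed



lemma piece_exists:
  assumes "admissible_seq tt"
  shows "\<exists>n. tt n \<le> s \<and> s < tt (n + 1)"
proof -
  have "eventually (\<lambda>n. tt n > s) at_top"
    using assms unfolding admissible_seq_def filterlim_at_top_dense by blast
  then obtain N where N: "\<forall>n\<ge>N. tt n > s" unfolding eventually_at_top_linorder by blast
  have "eventually (\<lambda>n. tt n \<le> s) at_bot"
    using assms unfolding admissible_seq_def filterlim_at_bot by blast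
  then obtain M where M: "\<forall>n\<le>M. tt n \<le> s" unfolding eventually_at_bot_linorder by blast
  have ind: "\<forall>M. tt M \<le> s \<longrightarrow> s < tt (M + int k) \<longrightarrow> (\<exists>n. tt n \<le> s \<and> s < tt (n + 1))" for k
  proof (induction k)
    case 0 then show ?case by auto
  next
    case (Suc k)
    show ?case
    proof (intro allI impI)
      fix M assume a: "tt M \<le> s" "s < tt (M + int (Suc k))"
      show "\<exists>n. tt n \<le> s \<and> s < tt (n + 1)"
      proof (cases "s < tt (M + 1)")
        case True then show ?thesis using a by blast
      next
        case False
        then have "tt (M + 1) \<le> s" by simp
        moreover have "s < tt ((M + 1) + int k)" using a(2) by (simp add: add.assoc)
        ultimately show ?thesis using Suc.IH by blast
      qed
    qed
  qed
  let ?M = "min M N"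
  have "tt ?M \<le> s" using M by simp
  moreover have "s < tt (?M + int (nat (N - ?M)))" using N by simp
  ultimately show ?thesis using ind by blast
qed

lemma piece_index_eq:
  assumes "admissible_seq tt" "tt n \<le> s" "s < tt (n + 1)"
  shows "piece_index tt s = n"
  unfolding piece_index_def
proof (rule the_equality)
  show "tt n \<le> s \<and> s < tt (n + 1)" using assms by simp
  fix n' assume b: "tt n' \<le> s \<and> s < tt (n' + 1)"
  have sm: "strict_mono tt" using assms(1) unfolding admissible_seq_def by simp
  show "n' = n"
  proof (rule ccontr)
    assume "n' \<noteq> n"
    then have "n + 1 \<le> n' \<or> n' + 1 \<le> n" by auto
    then show False
    proof
      assume "n + 1 \<le> n'" then have "tt (n + 1) \<le> tt n'" using sm strict_mono_less_eq by blast
      then show False using assms b by simp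
    next
      assume "n' + 1 \<le> n" then have "tt (n' + 1) \<le> tt n" using sm strict_mono_less_eq by blast
      then show False using assms b by simp
    qed
  qed
qed

lemma h2_shift:
  assumes "T \<in> (\<Inter>k\<in>{k::nat. k \<ge> 1}. {T::int. \<forall>n. \<bar>tk tt k (T + n) - tk tt k n\<bar> \<le> \<epsilon>})"
    and e: "\<epsilon> > 0"
  shows "\<bar>tt (n + T) - tt n - (tt T - tt 0)\<bar> \<le> \<epsilon>"
proof (cases "n = 0")
  case True then show ?thesis using e by simp
next
  case False
  show ?thesis
  proof (cases "n > 0")
    case True
    have "nat n \<ge> 1" using True by simp
    then have "\<bar>tk tt (nat n) (T + 0) - tk tt (nat n) 0\<bar> \<le> \<epsilon>" using assms(1) by blast
    then show ?thesis using True by (simp add: tk_def algebra_simps)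
  next
    case False
    then have n: "n < 0" using \<open>n \<noteq> 0\<close> by simp
    have "nat (-n) \<ge> 1" using n by simp
    then have "\<bar>tk tt (nat (-n)) (T + n) - tk tt (nat (-n)) n\<bar> \<le> \<epsilon>" using assms(1) by blast
    then show ?thesis using n by (simp add: tk_def algebra_simps abs_minus_commute)
  qed
qed

definition Et :: "(int \<Rightarrow> real) \<Rightarrow> real \<Rightarrow> real set" where
  "Et tt \<epsilon> = {\<sigma>. \<exists>T::int. \<forall>n. \<bar>tt (n + T) - tt n - \<sigma>\<bar> \<le> \<epsilon>}"

lemma Et_diff:
  assumes "a \<in> Et tt e1" "b \<in> Et tt e2"
  shows "a - b \<in> Et tt (e1 + e2)"
proof -
  obtain T1 where T1: "\<forall>n. \<bar>tt (n + T1) - tt n - a\<bar> \<le> e1" using assms(1) unfolding Et_def by blast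
  obtain T2 where T2: "\<forall>n. \<bar>tt (n + T2) - tt n - b\<bar> \<le> e2" using assms(2) unfolding Et_def by blast
  have "\<bar>tt (n + (T1 - T2)) - tt n - (a - b)\<bar> \<le> e1 + e2" for n
  proof -
    have 1: "\<bar>tt ((n - T2) + T1) - tt (n - T2) - a\<bar> \<le> e1" using T1 by blast
    have 2: "\<bar>tt ((n - T2) + T2) - tt (n - T2) - b\<bar> \<le> e2" using T2 by blast
    have q1: "n - T2 + T1 = n + (T1 - T2)" by simp
    have q2: "n - T2 + T2 = n" by simp
    have "tt (n + (T1 - T2)) - tt (n - T2) - a \<le> e1" "-(tt (n + (T1 - T2)) - tt (n - T2) - a) \<le> e1"
      using 1 unfolding q1 abs_le_iff by simp_all
    moreover have "tt n - tt (n - T2) - b \<le> e2" "-(tt n - tt (n - T2) - b) \<le> e2"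
      using 2 unfolding q2 abs_le_iff by simp_all
    ultimately show ?thesis unfolding abs_le_iff by linarith
  qed
  then show ?thesis unfolding Et_def by blast
qed

lemma seq_step_bound:
  assumes "\<forall>n. tt (n + 1) - tt n \<le> D"
  shows "tt (n + int k) \<le> tt n + real k * D"
proof (induction k)
  case 0 then show ?case by simp
next
  case (Suc k)
  have "tt (n + int (Suc k)) = tt ((n + int k) + 1)" by (simp add: ac_simps)
  also have "\<dots> \<le> tt (n + int k) + D" using assms[rule_format, of "n + int k"] by linarith
  also have "\<dots> \<le> tt n + real (Suc k) * D" using Suc.IH by (simp add: algebra_simps)
  finally show ?case .
qed

lemma Et_dense:
  assumes seq: "admissible_seq tt" and h2: "H2 tt" and e: "\<epsilon> > 0"
  shows "rel_dense (Et tt \<epsilon>)"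
proof -
  define S where "S = (\<Inter>k\<in>{k::nat. k \<ge> 1}. {T::int. \<forall>n. \<bar>tk tt k (T + n) - tk tt k n\<bar> \<le> \<epsilon>})"
  obtain l where l: "l > 0" "\<forall>m. \<exists>x\<in>real_of_int ` S. m \<le> x \<and> x \<le> m + l"
    using h2 e unfolding H2_def rel_dense_def S_def by blast
  define Li where "Li = nat \<lceil>l\<rceil>"
  define D where "D = (\<Sum>j\<in>{0..int Li}. \<bar>tt (j + 1) - tt j\<bar>) + \<epsilon>"
  have D: "tt (n + 1) - tt n \<le> D" for n
  proof -
    obtain T where T: "T \<in> S" "real_of_int n - l \<le> T" "T \<le> real_of_int n - l + l" using l(2) by fastforce
    define j where "j = n - T"
    have j: "0 \<le> j" "j \<le> int Li" using T unfolding j_def Li_def by (auto, linarith)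
    have "\<bar>tk tt 1 (T + j) - tk tt 1 j\<bar> \<le> \<epsilon>" using T(1) unfolding S_def by force
    then have "tt (n + 1) - tt n \<le> tt (j + 1) - tt j + \<epsilon>" unfolding tk_def j_def by simp
    also have "tt (j + 1) - tt j \<le> (\<Sum>j\<in>{0..int Li}. \<bar>tt (j + 1) - tt j\<bar>)"
      using j by (intro order_trans[OF abs_ge_self member_le_sum[where f = "\<lambda>j. \<bar>tt (j + 1) - tt j\<bar>"]]) auto
    finally show ?thesis unfolding D_def by simp
  qed
  have "tt 0 < tt (0 + 1)" using seq unfolding admissible_seq_def strict_mono_def by simp
  then have D0: "D \<ge> 0" using D[of 0] by linarith
  show ?thesis unfolding rel_dense_def
  proof (intro exI[of _ "D * (l + 1) + 1"] conjI allI)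
    have "D * (l + 1) \<ge> 0" by (rule mult_nonneg_nonneg) (use D0 l in auto)
    then show "0 < D * (l + 1) + 1" by linarith
    fix m
    obtain n0 where n0: "tt n0 \<le> m + tt 0" "m + tt 0 < tt (n0 + 1)" using piece_exists[OF seq] by blast
    obtain T where T: "T \<in> S" "real_of_int (n0 + 1) \<le> T" "T \<le> real_of_int (n0 + 1) + l"
      using l(2) by fastforce
    have sh: "\<forall>n. \<bar>tt (n + T) - tt n - (tt T - tt 0)\<bar> \<le> \<epsilon>"
      using h2_shift[of T tt \<epsilon>] T(1) e unfolding S_def by blast
    have "tt T - tt 0 \<in> Et tt \<epsilon>" unfolding Et_def using sh by blast
    moreover have "m \<le> tt T - tt 0"
    proof -
      have "n0 + 1 \<le> T" using T(2) by linarith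
      then have "tt (n0 + 1) \<le> tt T" using seq unfolding admissible_seq_def
        using strict_mono_less_eq by blast
      then show ?thesis using n0 by simp
    qed
    moreover have "tt T - tt 0 \<le> m + (D * (l + 1) + 1)"
    proof -
      define k where "k = nat (T - (n0 + 1))"
      have k: "T = (n0 + 1) + int k" "real k \<le> l" using T unfolding k_def by auto
      have "tt T \<le> tt (n0 + 1) + real k * D" using seq_step_bound[of tt D] D k(1) by simp
      also have "\<dots> \<le> tt n0 + D + l * D"
      proof -
        have "real k * D \<le> l * D" by (rule mult_right_mono[OF k(2) D0])
        then show ?thesis using D[of n0] by linarith
      qed
      finally show ?thesis using n0 D0 by (simp add: algebra_simps)
    qed
    ultimately show "\<exists>x\<in>Et tt \<epsilon>. m \<le> x \<and> x \<le> m + (D * (l + 1) + 1)" by blast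
  qed
qed



definition EFs :: "'w set \<Rightarrow> (real \<Rightarrow> 'w \<Rightarrow> 'b::real_normed_vector) \<Rightarrow> real \<Rightarrow> real set" where
  "EFs W F e = {\<tau>. \<forall>s. \<forall>w\<in>W. norm (F (s + \<tau>) w - F s w) \<le> e}"

definition Eys :: "(real \<Rightarrow> 'b::real_normed_vector) \<Rightarrow> real \<Rightarrow> real set" where
  "Eys y e = {\<tau>. \<forall>s. norm (y (s + \<tau>) - y s) \<le> e}"

definition Gs :: "'w set \<Rightarrow> (real \<Rightarrow> 'w \<Rightarrow> 'b::real_normed_vector) \<Rightarrow> (real \<Rightarrow> 'c::real_normed_vector) \<Rightarrow> real \<Rightarrow> real set" where
  "Gs W F y e = {\<tau>\<in>EFs W F e. \<exists>\<rho>\<in>Eys y e. \<bar>\<tau> - \<rho>\<bar> \<le> e}"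

lemma EFs_diff: "a \<in> EFs W F e1 \<Longrightarrow> b \<in> EFs W F e2 \<Longrightarrow> a - b \<in> EFs W F (e1 + e2)"
  unfolding EFs_def
proof (intro CollectI allI ballI)
  fix s w assume a: "a \<in> {\<tau>. \<forall>s. \<forall>w\<in>W. norm (F (s + \<tau>) w - F s w) \<le> e1}"
    and b: "b \<in> {\<tau>. \<forall>s. \<forall>w\<in>W. norm (F (s + \<tau>) w - F s w) \<le> e2}" and w: "w \<in> W"
  show "norm (F (s + (a - b)) w - F s w) \<le> e1 + e2"
    by (rule per_diff[where f = "\<lambda>s. F s w"]) (use a b w in auto)
qed

lemma Eys_diff: "a \<in> Eys y e1 \<Longrightarrow> b \<in> Eys y e2 \<Longrightarrow> a - b \<in> Eys y (e1 + e2)"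
  unfolding Eys_def
proof (intro CollectI allI)
  fix s assume a: "a \<in> {\<tau>. \<forall>s. norm (y (s + \<tau>) - y s) \<le> e1}"
    and b: "b \<in> {\<tau>. \<forall>s. norm (y (s + \<tau>) - y s) \<le> e2}"
  show "norm (y (s + (a - b)) - y s) \<le> e1 + e2"
    by (rule per_diff) (use a b in auto)
qed

lemma Gs_diff: "a \<in> Gs W F y e1 \<Longrightarrow> b \<in> Gs W F y e2 \<Longrightarrow> a - b \<in> Gs W F y (e1 + e2)"
proof -
  assume a: "a \<in> Gs W F y e1" and b: "b \<in> Gs W F y e2"
  obtain ra where ra: "a \<in> EFs W F e1" "ra \<in> Eys y e1" "\<bar>a - ra\<bar> \<le> e1" using a unfolding Gs_def by blast
  obtain rb where rb: "b \<in> EFs W F e2" "rb \<in> Eys y e2" "\<bar>b - rb\<bar> \<le> e2" using b unfolding Gs_def by blast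
  have "a - b \<in> EFs W F (e1 + e2)" by (rule EFs_diff[OF ra(1) rb(1)])
  moreover have "ra - rb \<in> Eys y (e1 + e2)" by (rule Eys_diff[OF ra(2) rb(2)])
  moreover have "\<bar>(a - b) - (ra - rb)\<bar> \<le> e1 + e2" using ra(3) rb(3) unfolding abs_le_iff by linarith
  ultimately show ?thesis unfolding Gs_def by blast
qed

lemma Gs_dense:
  assumes F: "\<forall>e>0. rel_dense (EFs W F e)" and y: "\<forall>e>0. rel_dense (Eys y e)" and e: "e > 0"
  shows "rel_dense (Gs W F y e)"
proof -
  have e2: "e/2 > 0" using e by simp
  have "rel_dense {\<tau>\<in>EFs W F e. \<exists>\<sigma>\<in>Eys y e. \<bar>\<tau> - \<sigma>\<bar> \<le> e}"
  proof (rule besicovitch)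
    show "rel_dense (EFs W F (e/2))" using F e2 by blast
    show "rel_dense (Eys y (e/2))" using y e2 by blast
    show "\<forall>a\<in>EFs W F (e/2). \<forall>a'\<in>EFs W F (e/2). a - a' \<in> EFs W F e"
      using EFs_diff[of _ W F "e/2" _ "e/2"] by simp
    show "\<forall>b\<in>Eys y (e/2). \<forall>b'\<in>Eys y (e/2). b - b' \<in> Eys y e"
      using Eys_diff[of _ y "e/2" _ "e/2"] by simp
  qed (rule e)
  then show ?thesis unfolding Gs_def .
qed

lemma Et_half: "a \<in> Et tt (e/2) \<Longrightarrow> b \<in> Et tt (e/2) \<Longrightarrow> a - b \<in> Et tt e"
  using Et_diff[of a tt "e/2" b "e/2"] by simp

lemma Gs_half: "a \<in> Gs W F y (e/2) \<Longrightarrow> b \<in> Gs W F y (e/2) \<Longrightarrow> a - b \<in> Gs W F y e"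
  using Gs_diff[of a W F y "e/2" b "e/2"] by simp

lemma norm_vec_le_sum:
  fixes x :: "'a::real_normed_vector^'n::finite"
  shows "norm x \<le> (\<Sum>i\<in>UNIV. norm (x $ i))"
  unfolding norm_vec_def by (rule L2_set_le_sum) simp

lemma sum_comp_le:
  fixes w v :: "'a::real_normed_vector^'n::finite"
  shows "(\<Sum>j\<in>UNIV. norm (w $ j - v $ j)) \<le> real CARD('n) * norm (w - v)"
proof -
  have "(\<Sum>j\<in>UNIV. norm (w $ j - v $ j)) \<le> of_nat (card (UNIV::'n set)) * norm (w - v)"
  proof (rule sum_bounded_above)
    fix j :: 'n
    have "norm (w $ j - v $ j) = norm ((w - v) $ j)" by simp
    also have "\<dots> \<le> norm (w - v)" by (rule Finite_Cartesian_Product.norm_nth_le)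
    finally show "norm (w $ j - v $ j) \<le> norm (w - v)" .
  qed
  then show ?thesis by simp
qed



lemma part1:
  fixes tt :: "int \<Rightarrow> real"
    and p :: "'l::finite \<Rightarrow> nat"
    and y :: "real \<Rightarrow> complex^'q::finite"
    and W :: "((complex^'q)^'l) set"
    and F :: "real \<Rightarrow> (complex^'q)^'l \<Rightarrow> complex^'q"
  assumes seq: "admissible_seq tt"
    and yc: "continuous_on UNIV y" and yap: "\<forall>e>0. rel_dense (Eys y e)"
    and Fap: "\<forall>e>0. rel_dense (EFs W F e)"
    and inW: "\<forall>s. (\<chi> j. y (gammaP tt (int (p j)) s)) \<in> W"
    and h2: "H2 tt"
    and L: "L > 0" "\<forall>s. \<forall>x\<in>W. \<forall>z\<in>W. norm (F s x - F s z) \<le> L * (\<Sum>j\<in>UNIV. norm (x $ j - z $ j))"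
    and e: "\<epsilon> > 0"
  shows "rel_dense {\<tau>. \<forall>s. s \<notin> (\<Union>n. {tt n - \<epsilon> <..< tt n + \<epsilon>}) \<longrightarrow>
        norm (F (s + \<tau>) (\<chi> j. y (gammaP tt (int (p j)) (s + \<tau>)))
              - F s (\<chi> j. y (gammaP tt (int (p j)) s))) \<le> \<epsilon>}"
proof -
  define N where "N = real CARD('l)"
  have N: "N > 0" unfolding N_def by simp
  define a where "a = \<epsilon> / (4 * L * N)"
  have a0: "a > 0" unfolding a_def using e L N by simp
  have LNa: "L * (N * (2 * a)) = \<epsilon> / 2" unfolding a_def using L N by (simp add: field_simps)
  have yap': "\<forall>e>0. rel_dense {\<tau>. \<forall>s. norm (y (s + \<tau>) - y s) \<le> e}" using yap unfolding Eys_def .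
  obtain dy where dy: "dy > 0" "\<forall>x h. \<bar>h\<bar> \<le> dy \<longrightarrow> norm (y (x + h) - y x) \<le> a"
    using ap_unif_cont[OF yc yap' a0] by blast
  define e' where "e' = min (\<epsilon>/2) (min a (dy/3))"
  define e1 where "e1 = min (\<epsilon>/4) (dy/3)"
  have e'0: "e' > 0" unfolding e'_def using e a0 dy by simp
  have e10: "e1 > 0" unfolding e1_def using e dy by simp
  have "rel_dense {\<tau>\<in>Gs W F y e'. \<exists>\<sigma>\<in>Et tt e1. \<bar>\<tau> - \<sigma>\<bar> \<le> e1}"
  proof (rule besicovitch)
    show "rel_dense (Gs W F y (e'/2))" by (rule Gs_dense[OF Fap yap]) (use e'0 in simp)
    show "rel_dense (Et tt (e1/2))" by (rule Et_dense[OF seq h2]) (use e10 in simp)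
    show "\<forall>a\<in>Gs W F y (e'/2). \<forall>a'\<in>Gs W F y (e'/2). a - a' \<in> Gs W F y e'"
      using Gs_half by blast
    show "\<forall>b\<in>Et tt (e1/2). \<forall>b'\<in>Et tt (e1/2). b - b' \<in> Et tt e1"
      using Et_half by blast
  qed (rule e10)
  then show ?thesis
  proof (rule rel_dense_mono, intro subsetI CollectI allI impI)
    fix \<tau> s
    assume "\<tau> \<in> {\<tau>\<in>Gs W F y e'. \<exists>\<sigma>\<in>Et tt e1. \<bar>\<tau> - \<sigma>\<bar> \<le> e1}"
    then obtain \<rho> \<sigma> T where tF: "\<tau> \<in> EFs W F e'" and r: "\<rho> \<in> Eys y e'" "\<bar>\<tau> - \<rho>\<bar> \<le> e'"
      and sT: "\<forall>n. \<bar>tt (n + T) - tt n - \<sigma>\<bar> \<le> e1" and ts: "\<bar>\<tau> - \<sigma>\<bar> \<le> e1"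
      unfolding Gs_def Et_def by blast
    assume nin: "s \<notin> (\<Union>n. {tt n - \<epsilon> <..< tt n + \<epsilon>})"
    obtain m where m: "tt m \<le> s" "s < tt (m + 1)" using piece_exists[OF seq] by blast
    have hn: "s \<notin> {tt n - \<epsilon> <..< tt n + \<epsilon>}" for n using nin by (rule contrapos_nn) (rule UN_I[OF UNIV_I])
    have "\<not> (tt m - \<epsilon> < s \<and> s < tt m + \<epsilon>)" using hn[of m] by simp
    then have s1: "tt m + \<epsilon> \<le> s" using m(1) e by linarith
    have "\<not> (tt (m + 1) - \<epsilon> < s \<and> s < tt (m + 1) + \<epsilon>)" using hn[of "m + 1"] by simp
    then have s2: "s \<le> tt (m + 1) - \<epsilon>" using m(2) e by linarith
    have pm: "piece_index tt s = m" by (rule piece_index_eq[OF seq m])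
    have sh1: "\<bar>tt (m + T) - tt m - \<sigma>\<bar> \<le> e1" using sT by blast
    have sh2: "\<bar>tt (m + 1 + T) - tt (m + 1) - \<sigma>\<bar> \<le> e1" using sT by blast
    have eq: "m + 1 + T = m + T + 1" by simp
    have e1e: "e1 \<le> \<epsilon>/4" unfolding e1_def by simp
    have "tt (m + T) \<le> s + \<tau>" using s1 sh1 ts e1e unfolding abs_le_iff by linarith
    moreover have "s + \<tau> < tt (m + T + 1)" using s2 sh2 ts e1e e unfolding eq abs_le_iff by linarith
    ultimately have pmT: "piece_index tt (s + \<tau>) = m + T" by (rule piece_index_eq[OF seq])
    have yb: "norm (y (tt (m + T - int (p j))) - y (tt (m - int (p j)))) \<le> 2 * a" for j
    proof -
      define x where "x = tt (m - int (p j))"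
      have "\<bar>tt ((m - int (p j)) + T) - tt (m - int (p j)) - \<sigma>\<bar> \<le> e1" using sT by blast
      moreover have "(m - int (p j)) + T = m + T - int (p j)" by simp
      ultimately have sx: "\<bar>tt (m + T - int (p j)) - x - \<sigma>\<bar> \<le> e1" unfolding x_def by simp
      define dd where "dd = tt (m + T - int (p j)) - x - \<rho>"
      have "e1 \<le> dy/3" "e' \<le> dy/3" unfolding e1_def e'_def by simp_all
      then have "\<bar>dd\<bar> \<le> dy" using sx ts r(2) unfolding dd_def abs_le_iff by linarith
      then have 1: "norm (y (x + \<rho> + dd) - y (x + \<rho>)) \<le> a" using dy(2) by blast
      have "norm (y (x + \<rho>) - y x) \<le> e'" using r(1) unfolding Eys_def by blast
      moreover have "e' \<le> a" unfolding e'_def by simp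
      ultimately have 2: "norm (y (x + \<rho>) - y x) \<le> a" by linarith
      have "norm (y (x + \<rho> + dd) - y x) \<le> a + a" by (rule norm_diff_triangle_le[OF 1 2])
      moreover have "x + \<rho> + dd = tt (m + T - int (p j))" unfolding dd_def by simp
      ultimately show ?thesis unfolding x_def by simp
    qed
    define w where "w = (\<chi> j. y (gammaP tt (int (p j)) s))"
    define w' where "w' = (\<chi> j. y (gammaP tt (int (p j)) (s + \<tau>)))"
    have wW: "w \<in> W" "w' \<in> W" unfolding w_def w'_def using inW by blast+
    have "(\<Sum>j\<in>UNIV. norm (w' $ j - w $ j)) \<le> of_nat (card (UNIV::'l set)) * (2 * a)"
    proof (rule sum_bounded_above)
      fix j :: 'l
      show "norm (w' $ j - w $ j) \<le> 2 * a"
        using yb[of j] unfolding w_def w'_def gammaP_def pm pmT by simp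
    qed
    then have sb: "(\<Sum>j\<in>UNIV. norm (w' $ j - w $ j)) \<le> N * (2 * a)" unfolding N_def by simp
    have "norm (F (s + \<tau>) w' - F (s + \<tau>) w) \<le> L * (\<Sum>j\<in>UNIV. norm (w' $ j - w $ j))"
      using L(2) wW by blast
    also have "\<dots> \<le> L * (N * (2 * a))" using sb L(1) by (simp add: mult_left_mono)
    finally have 1: "norm (F (s + \<tau>) w' - F (s + \<tau>) w) \<le> \<epsilon>/2" using LNa by simp
    have "norm (F (s + \<tau>) w - F s w) \<le> e'" using tF wW unfolding EFs_def by blast
    moreover have "e' \<le> \<epsilon>/2" unfolding e'_def by simp
    ultimately have 2: "norm (F (s + \<tau>) w - F s w) \<le> \<epsilon>/2" by linarith
    have "norm (F (s + \<tau>) w' - F s w) \<le> \<epsilon>/2 + \<epsilon>/2" by (rule norm_diff_triangle_le[OF 1 2])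
    then show "norm (F (s + \<tau>) (\<chi> j. y (gammaP tt (int (p j)) (s + \<tau>)))
              - F s (\<chi> j. y (gammaP tt (int (p j)) s))) \<le> \<epsilon>" unfolding w_def w'_def by simp
  qed
qed



lemma part2:
  fixes tt :: "int \<Rightarrow> real"
    and p :: "'l::finite \<Rightarrow> nat"
    and y :: "real \<Rightarrow> complex^'q::finite"
    and W :: "((complex^'q)^'l) set"
    and F :: "real \<Rightarrow> (complex^'q)^'l \<Rightarrow> complex^'q"
  assumes seq: "admissible_seq tt"
    and yc: "continuous_on UNIV y" and yap: "\<forall>e>0. rel_dense {\<tau>. \<forall>s. norm (y (s + \<tau>) - y s) \<le> e}"
    and Fap: "\<forall>e>0. rel_dense (EFs W F e)"
    and Fc: "continuous_on (UNIV \<times> W) (\<lambda>(s, w). F s w)"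
    and inW: "\<forall>s. (\<chi> j. y (gammaP tt (int (p j)) s)) \<in> W"
    and L: "L > 0" "\<forall>s. \<forall>x\<in>W. \<forall>z\<in>W. norm (F s x - F s z) \<le> L * (\<Sum>j\<in>UNIV. norm (x $ j - z $ j))"
    and e: "\<epsilon> > 0"
  shows "\<exists>\<delta>>0. \<forall>s \<tau> n. \<bar>\<tau>\<bar> \<le> \<delta> \<and> s \<in> {tt n ..< tt (n + 1)} \<and> s + \<tau> \<in> {tt n ..< tt (n + 1)} \<longrightarrow>
        norm (F (s + \<tau>) (\<chi> j. y (gammaP tt (int (p j)) (s + \<tau>)))
              - F s (\<chi> j. y (gammaP tt (int (p j)) s))) \<le> \<epsilon>"
proof -
  define N where "N = real CARD('l)"
  have N: "N > 0" unfolding N_def by simp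
  define R where "R = range (\<lambda>s. (\<chi> j. y (gammaP tt (int (p j)) s)))"
  have RW: "R \<subseteq> W" unfolding R_def using inW by blast
  obtain B where B: "\<forall>s. norm (y s) \<le> B" using ap_bounded[OF yc yap] by blast
  have "\<forall>w\<in>R. norm w \<le> N * B"
  proof
    fix w assume "w \<in> R"
    then obtain s where ws: "w = (\<chi> j. y (gammaP tt (int (p j)) s))" unfolding R_def by blast
    have "norm w \<le> (\<Sum>j\<in>UNIV. norm (w $ j))" by (rule norm_vec_le_sum)
    also have "\<dots> \<le> of_nat (card (UNIV::'l set)) * B"
      by (rule sum_bounded_above) (simp add: ws B)
    finally show "norm w \<le> N * B" unfolding N_def by simp
  qed
  then have "bounded R" unfolding bounded_iff by blast
  then have cR: "compact (closure R)" by simp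
  define r where "r = \<epsilon> / (6 * L * N)"
  have r0: "r > 0" unfolding r_def using e L N by simp
  have LNr: "L * (N * (2 * r)) = \<epsilon> / 3" unfolding r_def using L N by (simp add: field_simps)
  obtain k where k: "finite k" "closure R \<subseteq> (\<Union>x\<in>k. ball x r)"
    using cR r0 unfolding compact_eq_totally_bounded by blast
  define k' where "k' = {c\<in>k. \<exists>w\<in>R. dist c w < r}"
  have "\<forall>c\<in>k'. \<exists>w. w \<in> R \<and> dist c w < r" unfolding k'_def by blast
  from bchoice[OF this] obtain rp where rp: "\<forall>c\<in>k'. rp c \<in> R \<and> dist c (rp c) < r" by blast
  define K where "K = rp ` k'"
  have fK: "finite K" unfolding K_def k'_def using k(1) by simp
  have KR: "K \<subseteq> R" unfolding K_def using rp by blast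
  have net: "\<exists>v\<in>K. norm (w - v) < 2 * r" if "w \<in> R" for w
  proof -
    have "w \<in> closure R" using that closure_subset by blast
    then obtain c where c: "c \<in> k" "dist c w < r" using k(2) by auto
    then have ck: "c \<in> k'" unfolding k'_def using that by blast
    have "dist w (rp c) \<le> dist w c + dist c (rp c)" by (rule dist_triangle)
    also have "\<dots> < 2 * r"
    proof -
      have "dist c (rp c) < r" using rp ck by blast
      then show ?thesis using c(2) by (simp add: dist_commute)
    qed
    finally have "norm (w - rp c) < 2 * r" by (simp add: dist_norm)
    then show ?thesis unfolding K_def using ck by blast
  qed
  have ev: "\<forall>v\<in>K. eventually (\<lambda>d. \<forall>x h. \<bar>h\<bar> \<le> d \<longrightarrow> norm (F (x + h) v - F x v) \<le> \<epsilon>/3) (at_right (0::real))"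
  proof
    fix v assume "v \<in> K"
    then have vW: "v \<in> W" using KR RW by blast
    have "continuous_on UNIV (\<lambda>s. (\<lambda>(s, w). F s w) (s, v))"
      by (rule continuous_on_compose2[OF Fc]) (auto intro!: continuous_intros simp: vW)
    then have cv: "continuous_on UNIV (\<lambda>s. F s v)" by simp
    have av: "\<forall>e>0. rel_dense {\<tau>. \<forall>s. norm (F (s + \<tau>) v - F s v) \<le> e}"
    proof (intro allI impI)
      fix e :: real assume "e > 0"
      then have "rel_dense (EFs W F e)" using Fap by blast
      then show "rel_dense {\<tau>. \<forall>s. norm (F (s + \<tau>) v - F s v) \<le> e}"
        by (rule rel_dense_mono) (use vW in \<open>auto simp: EFs_def\<close>)
    qed
    have e3: "\<epsilon>/3 > 0" using e by simp
    obtain d where d: "d > 0" "\<forall>x h. \<bar>h\<bar> \<le> d \<longrightarrow> norm (F (x + h) v - F x v) \<le> \<epsilon>/3"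
      using ap_unif_cont[OF cv av e3] by blast
    show "eventually (\<lambda>d. \<forall>x h. \<bar>h\<bar> \<le> d \<longrightarrow> norm (F (x + h) v - F x v) \<le> \<epsilon>/3) (at_right (0::real))"
      unfolding eventually_at_right_field
    proof (intro exI[of _ d] conjI allI impI)
      show "0 < d" by (rule d(1))
      fix d' x h :: real assume "0 < d'" "d' < d" "\<bar>h\<bar> \<le> d'"
      then show "norm (F (x + h) v - F x v) \<le> \<epsilon>/3" using d(2) by simp
    qed
  qed
  have "eventually (\<lambda>d. \<forall>v\<in>K. \<forall>x h. \<bar>h\<bar> \<le> d \<longrightarrow> norm (F (x + h) v - F x v) \<le> \<epsilon>/3) (at_right (0::real))"
    by (rule eventually_ball_finite[OF fK ev])
  then obtain b where b: "b > 0" "\<forall>d>0. d < b \<longrightarrow> (\<forall>v\<in>K. \<forall>x h. \<bar>h\<bar> \<le> d \<longrightarrow> norm (F (x + h) v - F x v) \<le> \<epsilon>/3)"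
    unfolding eventually_at_right_field by blast
  have unifK: "\<forall>v\<in>K. \<forall>x h. \<bar>h\<bar> \<le> b/2 \<longrightarrow> norm (F (x + h) v - F x v) \<le> \<epsilon>/3"
  proof -
    have "b/2 > 0" "b/2 < b" using b(1) by simp_all
    then show ?thesis using b(2) by blast
  qed
  show ?thesis
  proof (intro exI[of _ "b/2"] conjI allI impI)
    show "0 < b/2" using b by simp
    fix s \<tau> n assume a: "\<bar>\<tau>\<bar> \<le> b / 2 \<and> s \<in> {tt n..<tt (n + 1)} \<and> s + \<tau> \<in> {tt n..<tt (n + 1)}"
    have p1: "piece_index tt s = n" using a by (intro piece_index_eq[OF seq]) auto
    have p2: "piece_index tt (s + \<tau>) = n" using a by (intro piece_index_eq[OF seq]) auto
    define w where "w = (\<chi> j. y (gammaP tt (int (p j)) s))"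
    have ww: "(\<chi> j. y (gammaP tt (int (p j)) (s + \<tau>))) = w"
      unfolding w_def gammaP_def p1 p2 ..
    have wR: "w \<in> R" unfolding w_def R_def by blast
    obtain v where v: "v \<in> K" "norm (w - v) < 2 * r" using net[OF wR] by blast
    have wW: "w \<in> W" "v \<in> W" using wR v(1) KR RW by blast+
    have lip: "norm (F t w - F t v) \<le> \<epsilon>/3" for t
    proof -
      have "norm (F t w - F t v) \<le> L * (\<Sum>j\<in>UNIV. norm (w $ j - v $ j))" using L(2) wW by blast
      also have "\<dots> \<le> L * (N * norm (w - v))" using sum_comp_le[of w v] L(1) unfolding N_def
        by (simp add: mult_left_mono)
      also have "\<dots> \<le> L * (N * (2 * r))" using v(2) L(1) N by (simp add: mult_left_mono)
      finally show ?thesis using LNr by simp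
    qed
    have 1: "norm (F (s + \<tau>) w - F (s + \<tau>) v) \<le> \<epsilon>/3" by (rule lip)
    have 2: "norm (F (s + \<tau>) v - F s v) \<le> \<epsilon>/3" using unifK v(1) a by blast
    have 3: "norm (F s v - F s w) \<le> \<epsilon>/3" using lip[of s] by (simp add: norm_minus_commute)
    have "norm (F (s + \<tau>) w - F s v) \<le> \<epsilon>/3 + \<epsilon>/3" by (rule norm_diff_triangle_le[OF 1 2])
    then have "norm (F (s + \<tau>) w - F s w) \<le> (\<epsilon>/3 + \<epsilon>/3) + \<epsilon>/3" by (rule norm_diff_triangle_le[OF _ 3])
    then show "norm (F (s + \<tau>) (\<chi> j. y (gammaP tt (int (p j)) (s + \<tau>)))
              - F s (\<chi> j. y (gammaP tt (int (p j)) s))) \<le> \<epsilon>" unfolding ww w_def by simp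
  qed
qed

theorem lemma9:
  fixes tt :: "int \<Rightarrow> real"
    and p :: "'l::finite \<Rightarrow> nat"
    and y :: "real \<Rightarrow> complex^'q::finite"
    and W :: "((complex^'q)^'l) set"
    and F :: "real \<Rightarrow> (complex^'q)^'l \<Rightarrow> complex^'q"
  assumes seq: "admissible_seq tt"
    and ap: "almost_periodic y"
    and inW: "\<forall>s. (\<chi> j. y (gammaP tt (int (p j)) s)) \<in> W"
    and h2: "H2 tt"
    and h4: "H4 W F"
  shows "\<forall>\<epsilon>>0.
     rel_dense {\<tau>. \<forall>s. s \<notin> (\<Union>n. {tt n - \<epsilon> <..< tt n + \<epsilon>}) \<longrightarrow>
        norm (F (s + \<tau>) (\<chi> j. y (gammaP tt (int (p j)) (s + \<tau>)))
              - F s (\<chi> j. y (gammaP tt (int (p j)) s))) \<le> \<epsilon>}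
     \<and> (\<exists>\<delta>>0. \<forall>s \<tau> n. \<bar>\<tau>\<bar> \<le> \<delta> \<and> s \<in> {tt n ..< tt (n + 1)} \<and> s + \<tau> \<in> {tt n ..< tt (n + 1)} \<longrightarrow>
        norm (F (s + \<tau>) (\<chi> j. y (gammaP tt (int (p j)) (s + \<tau>)))
              - F s (\<chi> j. y (gammaP tt (int (p j)) s))) \<le> \<epsilon>)"
proof -
  have Fc: "continuous_on (UNIV \<times> W) (\<lambda>(s, w). F s w)" using h4 unfolding H4_def by blast
  have uap: "unif_almost_periodic_on W F" using h4 unfolding H4_def by blast
  obtain L where L: "L > 0" "\<forall>s. \<forall>x\<in>W. \<forall>z\<in>W. norm (F s x - F s z) \<le> L * (\<Sum>j\<in>UNIV. norm (x $ j - z $ j))"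
    using h4 unfolding H4_def by blast
  have yc: "continuous_on UNIV y" using ap unfolding almost_periodic_def by blast
  have yap: "\<forall>e>0. rel_dense {\<tau>. \<forall>s. norm (y (s + \<tau>) - y s) \<le> e}"
    using ap unfolding almost_periodic_def by blast
  have yap': "\<forall>e>0. rel_dense (Eys y e)" using yap unfolding Eys_def .
  have Fap: "\<forall>e>0. rel_dense (EFs W F e)" using uap unfolding unif_almost_periodic_on_def EFs_def .
  show ?thesis
  proof (intro allI impI conjI)
    fix \<epsilon> :: real assume e: "\<epsilon> > 0"
    show "rel_dense {\<tau>. \<forall>s. s \<notin> (\<Union>n. {tt n - \<epsilon> <..< tt n + \<epsilon>}) \<longrightarrow>
        norm (F (s + \<tau>) (\<chi> j. y (gammaP tt (int (p j)) (s + \<tau>)))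
              - F s (\<chi> j. y (gammaP tt (int (p j)) s))) \<le> \<epsilon>}"
      by (rule part1[OF seq yc yap' Fap inW h2 L e])
    show "\<exists>\<delta>>0. \<forall>s \<tau> n. \<bar>\<tau>\<bar> \<le> \<delta> \<and> s \<in> {tt n ..< tt (n + 1)} \<and> s + \<tau> \<in> {tt n ..< tt (n + 1)} \<longrightarrow>
        norm (F (s + \<tau>) (\<chi> j. y (gammaP tt (int (p j)) (s + \<tau>)))
              - F s (\<chi> j. y (gammaP tt (int (p j)) s))) \<le> \<epsilon>"
      by (rule part2[OF seq yc yap Fap Fc inW L e])
  qed
qed

end
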